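(* Let $\alpha\in(0,1]$ and let $(X_1,\dots,X_n)$ be a random vector with joint survival function $$\Pr(X_1>x_1,\dots,X_n>x_n)=\exp\{-(x_1+\dots+x_n)^\alpha\},\qquad x_1,\dots,x_n\ge0,$$ i.e. Weibull($\alpha$) marginals $\Pr(X_i>x)=e^{-x^\alpha}$ with Gumbel survival copula $\bar C(u_1,\dots,u_n)=\exp\{-[\sum_{k=1}^n(-\log u_k)^{1/\alpha}]^\alpha\}$ (this is the mixture of exponentials model where, given $\Theta=\theta$, the $X_i$ are i.i.d. exponential with rate $\theta$, and $\Theta$ is positive stable with Laplace transform $e^{-s^\alpha}$). Then the pdf of $S_n=X_1+\dots+X_n$ is, for $x>0$, $$f_{S_n}(x)=\frac{x^{n-1}}{\Gamma(n)}\sum_{k=1}^n(-1)^{n+k}e^{-x^\alpha}B_{n,k}\Big((\alpha)_1x^{\alpha-1},(\alpha)_2x^{\alpha-2},\dots,(\alpha)_{n-k+1}x^{\alpha-(n-k+1)}\Big).$$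
   Context: $(\alpha)_j=\alpha(\alpha-1)\cdots(\alpha-j+1)$ is the falling factorial. The partial (incomplete exponential) Bell polynomials are $$B_{n,k}(x_1,\dots,x_{n-k+1})=\sum\frac{n!}{j_1!\cdots j_{n-k+1}!}\Big(\frac{x_1}{1!}\Big)^{j_1}\cdots\Big(\frac{x_{n-k+1}}{(n-k+1)!}\Big)^{j_{n-k+1}},$$ the sum taken over all sequences of non-negative integers $j_1,\dots,j_{n-k+1}$ with $\sum_i j_i=k$ and $\sum_i i\,j_i=n$. *)

theory Defs
  imports "HOL-Probability.Probability"
begin

definition falling_fact :: "real \<Rightarrow> nat \<Rightarrow> real" where
  "falling_fact a j = (\<Prod>i<j. a - real i)"

text \<open>Partial exponential Bell polynomial B_{n,k}(x_1,...,x_{n-k+1}); the arguments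
  are given as a function x, of which x 1, ..., x (n-k+1) are used.  The sum ranges
  over sequences j_1..j_{n-k+1} of naturals with sum j_i = k and sum i*j_i = n
  (entries are automatically bounded by k).\<close>
definition bell_partial :: "nat \<Rightarrow> nat \<Rightarrow> (nat \<Rightarrow> real) \<Rightarrow> real" where
  "bell_partial n k x =
     (\<Sum>j \<in> {j \<in> {1..n-k+1} \<rightarrow>\<^sub>E {..k}.
            (\<Sum>i=1..n-k+1. j i) = k \<and> (\<Sum>i=1..n-k+1. i * j i) = n}.
        fact n / (\<Prod>i=1..n-k+1. fact (j i)) * (\<Prod>i=1..n-k+1. (x i / fact i) ^ j i))"

end

theory Submission
  imports Defs "HOL-Computational_Algebra.Formal_Power_Series"
begin


definition bterm :: "nat set \<Rightarrow> (nat \<Rightarrow> real) \<Rightarrow> (nat \<Rightarrow> nat) \<Rightarrow> real" where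
  "bterm A x j = (\<Prod>i\<in>A. (x i / fact i) ^ j i / fact (j i))"

definition bset :: "nat \<Rightarrow> nat \<Rightarrow> nat \<Rightarrow> (nat \<Rightarrow> nat) set" where
  "bset N n k = {j \<in> {1..N} \<rightarrow>\<^sub>E {..k}. (\<Sum>i=1..N. j i) = k \<and> (\<Sum>i=1..N. i * j i) = n}"

definition beta :: "nat \<Rightarrow> nat \<Rightarrow> nat \<Rightarrow> (nat \<Rightarrow> real) \<Rightarrow> real" where
  "beta N n k x = (\<Sum>j\<in>bset N n k. bterm {1..N} x j)"

definition Ef :: "(nat \<Rightarrow> real) \<Rightarrow> real fps" where
  "Ef x = Abs_fps (\<lambda>i. if i = 0 then 0 else x i / fact i)"

lemma finite_bset: "finite (bset N n k)"
proof -
  have "bset N n k \<subseteq> {1..N} \<rightarrow>\<^sub>E {..k}" unfolding bset_def by blast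
  then show ?thesis by (rule finite_subset) (simp add: finite_PiE)
qed

lemma beta_0: "beta N n 0 x = (if n = 0 then 1 else 0)"
proof -
  have "bset N n 0 = (if n = 0 then {\<lambda>i\<in>{1..N}. 0} else {})"
  proof (cases "n = 0")
    case True
    have "j = (\<lambda>i\<in>{1..N}. 0)" if "j \<in> bset N n 0" for j
    proof
      fix i show "j i = (\<lambda>i\<in>{1..N}. 0) i"
        using that by (cases "i \<in> {1..N}") (auto simp: bset_def PiE_iff extensional_def)
    qed
    then show ?thesis using True by (auto simp: bset_def)
  next
    case False
    have "j \<notin> bset N n 0" for j
    proof
      assume j: "j \<in> bset N n 0"
      then have "\<forall>i\<in>{1..N}. j i = 0" by (auto simp: bset_def)
      then show False using j False by (simp add: bset_def)
    qed
    then show ?thesis using False by auto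
  qed
  then show ?thesis by (simp add: beta_def bterm_def)
qed

lemma bterm_upd:
  assumes "i \<in> {1..N}"
  shows "real (j i + 1) * bterm {1..N} x (j(i := j i + 1)) = (x i / fact i) * bterm {1..N} x j"
proof -
  have f: "finite {1..N}" by simp
  have "bterm {1..N} x (j(i := j i + 1)) =
      (x i / fact i) ^ (j i + 1) / fact (j i + 1) * (\<Prod>l\<in>{1..N}-{i}. (x l / fact l) ^ j l / fact (j l))"
    unfolding bterm_def using prod.remove[OF f assms, of "\<lambda>l. (x l / fact l) ^ (j(i := j i + 1)) l / fact ((j(i := j i + 1)) l)"]
    by (auto intro!: prod.cong)
  moreover have "bterm {1..N} x j =
      (x i / fact i) ^ (j i) / fact (j i) * (\<Prod>l\<in>{1..N}-{i}. (x l / fact l) ^ j l / fact (j l))"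
    unfolding bterm_def by (subst prod.remove[OF f assms]) simp
  moreover have "real (m+1) * (y^(m+1)/fact(m+1) * P) = y * (y^m/fact m * P)" for m y P
  proof -
    have nz: "(fact m::real) + fact m * real m \<noteq> 0"
      by (smt (verit) fact_gt_zero mult_nonneg_nonneg of_nat_0_le_iff)
    show ?thesis using nz by (simp add: field_simps)
  qed
  ultimately show ?thesis by simp
qed

lemma sum_upd_nat:
  assumes "i \<in> A" "finite A"
  shows "(\<Sum>l\<in>A. (j(i := v)) l) = (\<Sum>l\<in>A. j l) - j i + (v::nat)"
    "(\<Sum>l\<in>A. l * (j(i := v)) l) = (\<Sum>l\<in>A. l * j l) - i * j i + i * (v::nat)"
proof -
  have "(\<Sum>l\<in>A. (j(i := v)) l) = v + (\<Sum>l\<in>A-{i}. j l)"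
    using sum.remove[OF assms(2,1), of "j(i:=v)"] by (auto intro!: sum.cong)
  moreover have "(\<Sum>l\<in>A. j l) = j i + (\<Sum>l\<in>A-{i}. j l)"
    using sum.remove[OF assms(2,1)] by auto
  ultimately show "(\<Sum>l\<in>A. (j(i := v)) l) = (\<Sum>l\<in>A. j l) - j i + v" by simp
  have "(\<Sum>l\<in>A. l * (j(i := v)) l) = i * v + (\<Sum>l\<in>A-{i}. l * j l)"
    using sum.remove[OF assms(2,1), of "\<lambda>l. l * (j(i:=v)) l"] by (auto intro!: sum.cong)
  moreover have "(\<Sum>l\<in>A. l * j l) = i * j i + (\<Sum>l\<in>A-{i}. l * j l)"
    using sum.remove[OF assms(2,1)] by auto
  ultimately show "(\<Sum>l\<in>A. l * (j(i := v)) l) = (\<Sum>l\<in>A. l * j l) - i * j i + i * v" by simp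
qed

lemma bset_member_le:
  assumes "j \<in> bset N n k" "i \<in> {1..N}"
  shows "j i \<le> k" "i * j i \<le> n"
proof -
  have f: "finite {1..N}" by simp
  show "j i \<le> k" using assms member_le_sum[OF assms(2), of j, OF _ f] unfolding bset_def by auto
  show "i * j i \<le> n" using assms member_le_sum[OF assms(2), of "\<lambda>l. l * j l", OF _ f] unfolding bset_def by auto
qed

lemma beta_rec_i:
  assumes i: "i \<in> {1..N}" "i \<le> n"
  shows "(\<Sum>j\<in>bset N n (Suc k). real (j i) * bterm {1..N} x j) = (x i / fact i) * beta N (n - i) k x"
proof -
  have f: "finite {1..N}" by simp
  have "(\<Sum>j\<in>bset N n (Suc k). real (j i) * bterm {1..N} x j)
      = (\<Sum>j\<in>{j\<in>bset N n (Suc k). j i \<noteq> 0}. real (j i) * bterm {1..N} x j)"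
    by (rule sum.mono_neutral_right) (auto simp: finite_bset)
  also have "{j\<in>bset N n (Suc k). j i \<noteq> 0} = (\<lambda>j. j(i := j i + 1)) ` bset N (n - i) k"
  proof (intro set_eqI iffI)
    fix j assume j: "j \<in> {j\<in>bset N n (Suc k). j i \<noteq> 0}"
    let ?j = "j(i := j i - 1)"
    have "j = ?j(i := ?j i + 1)" using j by auto
    moreover have "?j \<in> bset N (n - i) k"
    proof -
      have "i * j i \<le> n" using bset_member_le[of j] j i by auto
      have s1: "(\<Sum>l=1..N. ?j l) = k" using sum_upd_nat(1)[OF i(1) f, of j "j i - 1"] j
          bset_member_le(1)[of j N n "Suc k" i] i(1)
        unfolding bset_def by auto
      have "?j \<in> {1..N} \<rightarrow>\<^sub>E {..k}"
      proof -
        have "?j l \<le> k" if "l \<in> {1..N}" for l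
          using member_le_sum[OF that, of ?j, OF _ f] s1 by simp
        moreover have "?j \<in> extensional {1..N}" using j i unfolding bset_def
          by (auto simp: PiE_iff extensional_def)
        ultimately show ?thesis by (auto simp: PiE_iff)
      qed
      moreover note s1
      moreover have "(\<Sum>l=1..N. l * ?j l) = n - i" using sum_upd_nat(2)[OF i(1) f, of j "j i - 1"] j
          \<open>i * j i \<le> n\<close>
        unfolding bset_def by (auto simp: diff_mult_distrib2)
      ultimately show ?thesis unfolding bset_def by auto
    qed
    ultimately show "j \<in> (\<lambda>j. j(i := j i + 1)) ` bset N (n - i) k" by blast
  next
    fix j assume "j \<in> (\<lambda>j. j(i := j i + 1)) ` bset N (n - i) k"
    then obtain j' where j': "j' \<in> bset N (n - i) k" and jj: "j = j'(i := j' i + 1)" by auto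
    have le: "i * j' i \<le> n - i" using bset_member_le[OF j' i(1)] by auto
    have "j \<in> {1..N} \<rightarrow>\<^sub>E {..Suc k}" using j' bset_member_le(1)[OF j' i(1)] i(1) unfolding jj bset_def
      by (auto simp: PiE_iff extensional_def)
    moreover have "(\<Sum>l=1..N. j l) = Suc k" using sum_upd_nat(1)[OF i(1) f, of j' "j' i + 1"] j'
        bset_member_le(1)[OF j' i(1)] member_le_sum[OF i(1), of j', OF _ f]
      unfolding jj bset_def by auto
    moreover have "(\<Sum>l=1..N. l * j l) = n" using sum_upd_nat(2)[OF i(1) f, of j' "j' i + 1"] j' le i
        member_le_sum[OF i(1), of "\<lambda>l. l * j' l", OF _ f]
      unfolding jj bset_def by (auto simp: algebra_simps)
    ultimately show "j \<in> {j\<in>bset N n (Suc k). j i \<noteq> 0}" unfolding bset_def jj by auto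
  qed
  also have "(\<Sum>j\<in>(\<lambda>j. j(i := j i + 1)) ` bset N (n - i) k. real (j i) * bterm {1..N} x j)
      = (\<Sum>j\<in>bset N (n - i) k. real (j i + 1) * bterm {1..N} x (j(i := j i + 1)))"
  proof (subst sum.reindex)
    show "inj_on (\<lambda>j. j(i := j i + 1)) (bset N (n - i) k)"
    proof (rule inj_onI)
      fix a b :: "nat \<Rightarrow> nat" assume "a(i := a i + 1) = b(i := b i + 1)"
      then have *: "(a(i := a i + 1)) i = (b(i := b i + 1)) i" "\<And>l. l \<noteq> i \<Longrightarrow> a l = b l"
        by (metis fun_upd_other)+
      show "a = b"
      proof
        fix l
        have "a i = b i" using *(1) by simp
        then show "a l = b l" using *(2) by (cases "l = i") auto
      qed
    qed
  qed simp
  also have "\<dots> = (\<Sum>j\<in>bset N (n - i) k. (x i / fact i) * bterm {1..N} x j)"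
    by (rule sum.cong[OF refl], rule bterm_upd[OF i(1)])
  finally show ?thesis by (simp add: beta_def sum_distrib_left)
qed

lemma beta_rec:
  "real (Suc k) * beta N n (Suc k) x = (\<Sum>i\<in>{1..N} \<inter> {..n}. (x i / fact i) * beta N (n - i) k x)"
proof -
  have "real (Suc k) * beta N n (Suc k) x =
      (\<Sum>j\<in>bset N n (Suc k). (\<Sum>i=1..N. real (j i)) * bterm {1..N} x j)"
    unfolding beta_def sum_distrib_left
    by (rule sum.cong[OF refl]) (auto simp: bset_def simp flip: of_nat_sum)
  also have "\<dots> = (\<Sum>i=1..N. \<Sum>j\<in>bset N n (Suc k). real (j i) * bterm {1..N} x j)"
    by (simp add: sum_distrib_right sum.swap[of _ "bset N n (Suc k)"])
  also have "\<dots> = (\<Sum>i\<in>{1..N} \<inter> {..n}. \<Sum>j\<in>bset N n (Suc k). real (j i) * bterm {1..N} x j)"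
  proof (rule sum.mono_neutral_right)
    show "\<forall>i\<in>{1..N} - {1..N} \<inter> {..n}. (\<Sum>j\<in>bset N n (Suc k). real (j i) * bterm {1..N} x j) = 0"
    proof
      fix i assume i: "i \<in> {1..N} - {1..N} \<inter> {..n}"
      have "\<And>j. j \<in> bset N n (Suc k) \<Longrightarrow> j i = 0"
      proof (rule ccontr)
        fix j assume "j \<in> bset N n (Suc k)" "j i \<noteq> 0"
        then have a: "i * j i \<le> n" using bset_member_le(2)[of j N n "Suc k" i] i by auto
        have "i * 1 \<le> i * j i" using \<open>j i \<noteq> 0\<close> by (intro mult_le_mono2) auto
        moreover have "\<not> i \<le> n" using i by auto
        ultimately show False using a by linarith
      qed
      then show "(\<Sum>j\<in>bset N n (Suc k). real (j i) * bterm {1..N} x j) = 0" by (intro sum.neutral) auto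
    qed
  qed auto
  also have "\<dots> = (\<Sum>i\<in>{1..N} \<inter> {..n}. (x i / fact i) * beta N (n - i) k x)"
    by (rule sum.cong[OF refl], rule beta_rec_i) auto
  finally show ?thesis .
qed

lemma beta_Ef: "n \<le> N \<Longrightarrow> fact k * beta N n k x = fps_nth (Ef x ^ k) n"
proof (induction k arbitrary: n)
  case 0
  then show ?case by (simp add: beta_0)
next
  case (Suc k)
  have "fact (Suc k) * beta N n (Suc k) x = fact k * (real (Suc k) * beta N n (Suc k) x)"
    by simp
  also have "\<dots> = (\<Sum>i\<in>{1..n}. (x i / fact i) * (fact k * beta N (n - i) k x))"
  proof -
    have "{1..N} \<inter> {..n} = {1..n}" using Suc.prems by auto
    then have "real (Suc k) * beta N n (Suc k) x = (\<Sum>i\<in>{1..n}. (x i / fact i) * beta N (n - i) k x)"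
      using beta_rec[of k N n x] \<open>{1..N} \<inter> {..n} = {1..n}\<close> by (simp only:)
    then show ?thesis by (simp add: sum_distrib_left mult.left_commute)
  qed
  also have "\<dots> = (\<Sum>i\<in>{1..n}. fps_nth (Ef x) i * fps_nth (Ef x ^ k) (n - i))"
    using Suc by (intro sum.cong refl) (auto simp: Ef_def)
  also have "\<dots> = (\<Sum>i=0..n. fps_nth (Ef x) i * fps_nth (Ef x ^ k) (n - i))"
    by (rule sum.mono_neutral_left) (auto simp: Ef_def)
  also have "\<dots> = fps_nth (Ef x ^ Suc k) n" by (simp add: fps_mult_nth)
  finally show ?case .
qed



lemma sum_weighted_ge:
  fixes j :: "nat \<Rightarrow> nat"
  assumes "finite B" "\<And>l. l \<in> B \<Longrightarrow> 1 \<le> l" "i \<in> B"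
  shows "(\<Sum>l\<in>B. j l) + (i - 1) * j i \<le> (\<Sum>l\<in>B. l * j l)"
proof -
  have "(\<Sum>l\<in>B. l * j l) = (\<Sum>l\<in>B. j l + (l - 1) * j l)"
    using assms(2) by (intro sum.cong refl) (metis add.commute le_add_diff_inverse2 mult.commute mult_Suc_right plus_1_eq_Suc)
  also have "\<dots> = (\<Sum>l\<in>B. j l) + (\<Sum>l\<in>B. (l - 1) * j l)" by (simp add: sum.distrib)
  finally show ?thesis using member_le_sum[OF assms(3), of "\<lambda>l. (l - 1) * j l", OF _ assms(1)] by simp
qed

lemma bset_zero_outside:
  assumes j: "j \<in> bset (n+1) n k" and i: "i \<in> {1..n+1}" "i \<notin> {1..n-k+1}"
  shows "j i = 0"
proof (rule ccontr)
  assume nz: "j i \<noteq> 0"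
  have s: "(\<Sum>l=1..n+1. j l) = k" "(\<Sum>l=1..n+1. l * j l) = n" using j by (auto simp: bset_def)
  have "(\<Sum>l=1..n+1. j l) + (i - 1) * j i \<le> (\<Sum>l=1..n+1. l * j l)"
    by (rule sum_weighted_ge) (use i in auto)
  then have a: "k + (i - 1) * j i \<le> n" using s by simp
  have "(i - 1) * 1 \<le> (i - 1) * j i" using nz by (intro mult_le_mono2) auto
  then have b: "k + (i - 1) \<le> n" using a by linarith
  have "\<not> i \<le> n - k + 1" using i by auto
  then show False using b by arith
qed

lemma bell_beta: "bell_partial n k x = fact n * beta (n+1) n k x"
proof -
  define A where "A = {1..n-k+1}"
  define S where "S = {j \<in> A \<rightarrow>\<^sub>E {..k}. (\<Sum>i\<in>A. j i) = k \<and> (\<Sum>i\<in>A. i * j i) = n}"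
  define ext where "ext j = (\<lambda>i. if i \<in> A then j i else if i \<in> {1..n+1} then 0 else undefined)" for j :: "nat \<Rightarrow> nat"
  have AN: "A \<subseteq> {1..n+1}" unfolding A_def by auto
  have fA: "finite A" unfolding A_def by simp
  have ext_sum: "(\<Sum>i=1..n+1. f i (ext j i)) = (\<Sum>i\<in>A. f i (j i))" if "\<And>i. f i 0 = 0" for f :: "nat \<Rightarrow> nat \<Rightarrow> nat" and j
  proof -
    have "(\<Sum>i=1..n+1. f i (ext j i)) = (\<Sum>i\<in>A. f i (ext j i))"
      by (rule sum.mono_neutral_right) (use AN that in \<open>auto simp: ext_def\<close>)
    then show ?thesis by (simp add: ext_def)
  qed
  have ext_prod: "(\<Prod>i=1..n+1. f i (ext j i)) = (\<Prod>i\<in>A. f i (j i))" if "\<And>i. f i 0 = 1" for f :: "nat \<Rightarrow> nat \<Rightarrow> real" and j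
  proof -
    have "(\<Prod>i=1..n+1. f i (ext j i)) = (\<Prod>i\<in>A. f i (ext j i))"
      by (rule prod.mono_neutral_right) (use AN that in \<open>auto simp: ext_def\<close>)
    then show ?thesis by (simp add: ext_def)
  qed
  have "bell_partial n k x = (\<Sum>j\<in>S. fact n * bterm A x j)"
    unfolding bell_partial_def S_def A_def bterm_def
    by (intro sum.cong refl) (simp add: prod_dividef)
  also have "\<dots> = fact n * (\<Sum>j\<in>S. bterm A x j)" by (simp add: sum_distrib_left)
  also have "(\<Sum>j\<in>S. bterm A x j) = (\<Sum>j\<in>bset (n+1) n k. bterm {1..n+1} x j)"
  proof (rule sum.reindex_bij_witness[where i = "\<lambda>j. restrict j A" and j = ext])
    fix j assume j: "j \<in> S"
    show "restrict (ext j) A = j" using j unfolding S_def ext_def by (auto simp: PiE_iff extensional_def fun_eq_iff)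
    have "ext j \<in> {1..n+1} \<rightarrow>\<^sub>E {..k}" using j AN unfolding S_def ext_def by (auto simp: PiE_iff extensional_def)
    moreover have "(\<Sum>i=1..n+1. ext j i) = k" using ext_sum[of "\<lambda>i v. v" j] j unfolding S_def by simp
    moreover have "(\<Sum>i=1..n+1. i * ext j i) = n" using ext_sum[of "\<lambda>i v. i * v" j] j unfolding S_def by simp
    ultimately show "ext j \<in> bset (n+1) n k" unfolding bset_def by auto
    show "bterm {1..n+1} x (ext j) = bterm A x j"
      unfolding bterm_def using ext_prod[of "\<lambda>i v. (x i / fact i) ^ v / fact v" j] by simp
  next
    fix j assume j: "j \<in> bset (n+1) n k"
    have z: "\<And>i. i \<in> {1..n+1} \<Longrightarrow> i \<notin> A \<Longrightarrow> j i = 0"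
      using bset_zero_outside[OF j] unfolding A_def by auto
    show "ext (restrict j A) = j"
    proof
      fix i show "ext (restrict j A) i = j i"
        using z[of i] j by (auto simp: ext_def bset_def PiE_iff extensional_def)
    qed
    have e: "ext (restrict j A) = j"
    proof
      fix i show "ext (restrict j A) i = j i"
        using z[of i] j by (auto simp: ext_def bset_def PiE_iff extensional_def)
    qed
    have "restrict j A \<in> A \<rightarrow>\<^sub>E {..k}" using j AN by (auto simp: bset_def PiE_iff)
    moreover have "(\<Sum>i\<in>A. restrict j A i) = k"
      using ext_sum[of "\<lambda>i v. v" "restrict j A"] j e by (simp add: bset_def)
    moreover have "(\<Sum>i\<in>A. i * restrict j A i) = n"
      using ext_sum[of "\<lambda>i v. i * v" "restrict j A"] j e by (simp add: bset_def)
    ultimately show "restrict j A \<in> S" unfolding S_def by auto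
  qed
  also have "\<dots> = beta (n+1) n k x" by (simp add: beta_def)
  finally show ?thesis .
qed

lemma bell_Ef: "bell_partial n k x = fact n / fact k * fps_nth (Ef x ^ k) n"
  using bell_beta[of n k x] beta_Ef[of n "n+1" k x] by (simp add: field_simps)



definition Fa :: "real \<Rightarrow> real fps" where "Fa a = fps_binomial a - 1"

lemma Fa_nth: "fps_nth (Fa a) i = (if i = 0 then 0 else a gchoose i)"
  by (simp add: Fa_def)

lemma Ef_falling: "Ef (falling_fact a) = Fa a"
proof (rule fps_ext)
  fix i show "fps_nth (Ef (falling_fact a)) i = fps_nth (Fa a) i"
    by (simp add: Ef_def Fa_nth falling_fact_def gbinomial_prod_rev atLeast0LessThan)
qed

lemma pow_scale:
  fixes A B :: "real fps"
  assumes "\<And>i. fps_nth A i = c * r ^ i * fps_nth B i"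
  shows "fps_nth (A ^ k) n = c ^ k * r ^ n * fps_nth (B ^ k) (n::nat)"
proof (induction k arbitrary: n)
  case 0
  then show ?case by (cases n) auto
next
  case (Suc k)
  have "fps_nth (A ^ Suc k) n = (\<Sum>i=0..n. fps_nth A i * fps_nth (A^k) (n - i))"
    by (simp add: fps_mult_nth)
  also have "\<dots> = (\<Sum>i=0..n. c ^ Suc k * r ^ n * (fps_nth B i * fps_nth (B^k) (n - i)))"
  proof (intro sum.cong refl)
    fix i assume "i \<in> {0..n}"
    then have eq: "r ^ i * r ^ (n - i) = r ^ n" by (simp flip: power_add)
    have "fps_nth A i * fps_nth (A^k) (n - i) = (c * c^k) * (r^i * r^(n-i)) * (fps_nth B i * fps_nth (B^k) (n - i))"
      unfolding assms[of i] Suc.IH[of "n - i"] by (simp only: mult_ac)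
    then show "fps_nth A i * fps_nth (A^k) (n - i) = c ^ Suc k * r ^ n * (fps_nth B i * fps_nth (B^k) (n - i))"
      by (simp only: eq power_Suc)
  qed
  also have "\<dots> = c ^ Suc k * r ^ n * fps_nth (B ^ Suc k) n"
    by (simp add: fps_mult_nth sum_distrib_left)
  finally show ?case .
qed

definition cc :: "real \<Rightarrow> nat \<Rightarrow> nat \<Rightarrow> real" where
  "cc a n k = fact n / fact k * fps_nth (Fa a ^ k) n"

lemma bell_falling:
  assumes "y > 0"
  shows "bell_partial n k (\<lambda>j. falling_fact a j * y powr (a - real j)) = cc a n k * (y powr a) ^ k * (1 / y) ^ n"
proof -
  have "fps_nth (Ef (\<lambda>j. falling_fact a j * y powr (a - real j))) i = y powr a * (1/y) ^ i * fps_nth (Fa a) i" for i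
  proof -
    have "y powr (a - real i) = y powr a * (1/y) ^ i" using assms
      by (simp add: powr_diff powr_realpow divide_inverse power_one_over power_inverse)
    then show ?thesis using Ef_falling[of a, symmetric]
      by (simp add: Ef_def)
  qed
  from pow_scale[OF this, of k n] show ?thesis
    by (simp add: bell_Ef cc_def)
qed

lemma Fa_pow_zero: "n < k \<Longrightarrow> fps_nth (Fa a ^ k) n = 0"
proof (induction k arbitrary: n)
  case (Suc k)
  have "fps_nth (Fa a ^ Suc k) n = (\<Sum>i=0..n. fps_nth (Fa a) i * fps_nth (Fa a ^ k) (n - i))"
    by (simp add: fps_mult_nth)
  also have "\<dots> = 0"
  proof (intro sum.neutral ballI)
    fix i assume "i \<in> {0..n}"
    then show "fps_nth (Fa a) i * fps_nth (Fa a ^ k) (n - i) = 0"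
      using Suc by (cases "i = 0") (auto simp: Fa_nth)
  qed
  finally show ?case .
qed simp

lemma cc_zero: "n < k \<Longrightarrow> cc a n k = 0"
  by (simp add: cc_def Fa_pow_zero)

lemma cc_0: "cc a 0 k = (if k = 0 then 1 else 0)"
proof (cases "k = 0")
  case False
  then have "fps_nth (Fa a ^ k) 0 = 0" by (intro Fa_pow_zero) auto
  then show ?thesis using False by (simp add: cc_def)
qed (simp add: cc_def)

lemma binom_ode: "(1 + fps_X) * fps_deriv (fps_binomial a) = fps_const a * fps_binomial (a::real)"
proof (rule fps_ext)
  fix n
  have g: "real (Suc m) * (a gchoose Suc m) = (a - real m) * (a gchoose m)" for m
  proof -
    have "fact (Suc m) * (a gchoose Suc m) = fact m * ((a - real m) * (a gchoose m))"
      using gbinomial_mult_fact[of "Suc m" a] gbinomial_mult_fact[of m a] by simp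
    then have "fact m * (real (Suc m) * (a gchoose Suc m)) = fact m * ((a - real m) * (a gchoose m))"
      by (simp only: fact_Suc of_nat_mult mult.assoc mult.commute mult.left_commute)
    then show ?thesis by (rule mult_left_cancel[THEN iffD1, OF fact_nonzero])
  qed
  show "fps_nth ((1 + fps_X) * fps_deriv (fps_binomial a)) n = fps_nth (fps_const a * fps_binomial a) n"
  proof (cases n)
    case 0 then show ?thesis using g[of 0] by (simp add: algebra_simps)
  next
    case (Suc m)
    then show ?thesis using g[of n] g[of m] by (simp add: algebra_simps)
  qed
qed

lemma Fa_pow_ode:
  "(1 + fps_X) * fps_deriv (Fa a ^ Suc m) = fps_const (a * real (Suc m)) * (Fa a ^ Suc m + Fa a ^ m)"
proof -
  have "fps_deriv (Fa a ^ Suc m) = fps_const (real (Suc m)) * fps_deriv (fps_binomial a) * Fa a ^ m"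
    by (simp only: fps_deriv_power) (simp add: Fa_def)
  then have "(1 + fps_X) * fps_deriv (Fa a ^ Suc m) = fps_const (real (Suc m)) * ((1 + fps_X) * fps_deriv (fps_binomial a)) * Fa a ^ m"
    by (simp add: algebra_simps)
  also have "\<dots> = fps_const (real (Suc m)) * (fps_const a * (Fa a + 1)) * Fa a ^ m"
    by (simp add: binom_ode Fa_def)
  also have "\<dots> = fps_const (a * real (Suc m)) * (Fa a ^ Suc m + Fa a ^ m)"
  proof -
    have r: "(C::real fps) * (Ca * (F + 1)) * F^m = (C*Ca) * (F^Suc m + F^m)" for C Ca F
      by (simp add: algebra_simps)
    show ?thesis unfolding r by (simp add: mult.commute)
  qed
  finally show ?thesis .
qed

lemma coeff_ode:
  fixes P Q :: "real fps"
  assumes "(1 + fps_X) * fps_deriv P = fps_const c * (P + Q)"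
  shows "real (Suc n) * fps_nth P (Suc n) + real n * fps_nth P n = c * (fps_nth P n + fps_nth Q n)"
proof -
  have "fps_nth ((1 + fps_X) * fps_deriv P) n = fps_nth (fps_const c * (P + Q)) n" using assms by simp
  then show ?thesis by (cases n) (simp_all add: distrib_right algebra_simps)
qed

lemma cc_rec_aux:
  fixes F G M N' Nn P1 P0 Q0 a :: real
  assumes "M > 0" "G > 0" "N' * P1 = a * M * (P0 + Q0) - Nn * P0"
  shows "F * N' / (G * M) * P1 = (M * a - Nn) * (F / (G * M) * P0) + a * (F / G * Q0)"
proof -
  have "F * N' / (G * M) * P1 = F / (G * M) * (N' * P1)" by simp
  also have "\<dots> = F / (G * M) * (a * M * (P0 + Q0) - Nn * P0)" using assms(3) by simp
  also have "\<dots> = (M * a - Nn) * (F / (G * M) * P0) + a * (F / G * Q0)"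
    using assms(1,2) by (simp add: field_simps)
  finally show ?thesis .
qed

lemma cc_rec:
  "cc a (Suc n) k = (real k * a - real n) * cc a n k + (if k = 0 then 0 else a * cc a n (k - 1))"
proof (cases k)
  case 0
  then show ?thesis by (simp add: cc_def)
next
  case (Suc m)
  define p1 where "p1 = fps_nth (Fa a ^ Suc m) (Suc n)"
  define p0 where "p0 = fps_nth (Fa a ^ Suc m) n"
  define q0 where "q0 = fps_nth (Fa a ^ m) n"
  have e: "real (Suc n) * p1 + real n * p0 = a * real (Suc m) * (p0 + q0)"
    unfolding p1_def p0_def q0_def by (rule coeff_ode[OF Fa_pow_ode])
  have c1: "cc a (Suc n) k = fact n * real (Suc n) / (fact m * real (Suc m)) * p1"
    unfolding cc_def p1_def Suc by (simp only: fact_Suc of_nat_mult mult.commute)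
  have c2: "cc a n k = fact n / (fact m * real (Suc m)) * p0"
    unfolding cc_def p0_def Suc by (simp only: fact_Suc of_nat_mult mult.commute)
  have c3: "cc a n (k - 1) = fact n / fact m * q0"
    unfolding cc_def q0_def Suc by simp
  have fm: "fact m > (0::real)" by simp
  have e2: "real (Suc n) * p1 = a * real (Suc m) * (p0 + q0) - real n * p0"
    by (subst eq_diff_eq) (rule e)
  have "cc a (Suc n) k = (real k * a - real n) * cc a n k + a * cc a n (k - 1)"
    apply (simp only: c1 c2 c3)
    using cc_rec_aux[OF _ fm e2, of "fact n"] Suc by simp
  then show ?thesis using Suc by simp
qed

lemma cc_sign: "0 < a \<Longrightarrow> a \<le> 1 \<Longrightarrow> 0 \<le> (-1) ^ (n + k) * cc a n k"
proof (induction n arbitrary: k)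
  case 0
  then show ?case by (simp add: cc_0)
next
  case (Suc n)
  show ?case
  proof (cases "k \<le> n")
    case True
    have r: "(-1) ^ (Suc n + k) * cc a (Suc n) k = (real n - real k * a) * ((-1) ^ (n + k) * cc a n k)
        + (if k = 0 then 0 else a * ((-1) ^ (n + (k - 1)) * cc a n (k - 1)))"
    proof (cases k)
      case 0 then show ?thesis by (simp add: cc_rec)
    next
      case (Suc m)
      define s where "s = (-1::real) ^ (n + m)"
      have p1: "(-1::real)^(Suc n + Suc m) = s" unfolding s_def by simp
      have p2: "(-1::real)^(n + Suc m) = - s" unfolding s_def by simp
      have p3: "(-1::real)^(n + (Suc m - 1)) = s" unfolding s_def by simp
      show ?thesis unfolding Suc p1 p2 p3 cc_rec[of a n "Suc m"] by (simp add: algebra_simps)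
    qed
    have "real k * a \<le> real k" using Suc.prems by (simp add: mult_left_le)
    then have "real k * a \<le> real n" using True by (meson of_nat_le_iff order_trans)
    have i1: "0 \<le> real n - real k * a" using \<open>real k * a \<le> real n\<close> by simp
    have i2: "0 \<le> (-1) ^ (n + k) * cc a n k" using Suc.IH[of k] Suc.prems by simp
    have i3: "0 \<le> (if k = 0 then 0 else a * ((-1) ^ (n + (k - 1)) * cc a n (k - 1)))"
      using Suc.IH[of "k - 1"] Suc.prems by (cases k) simp_all
    show ?thesis unfolding r by (rule add_nonneg_nonneg[OF mult_nonneg_nonneg[OF i1 i2] i3])
  next
    case False
    then show ?thesis
    proof (cases "k = Suc n")
      case True
      have "cc a (Suc n) (Suc n) = a * cc a n n" using cc_rec[of a n "Suc n"] by (simp add: cc_zero)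
      then show ?thesis using True Suc.IH[of n] Suc.prems
        by (simp add: power_add mult_nonneg_nonneg)
    next
      case False
      then show ?thesis using \<open>\<not> k \<le> n\<close> by (simp add: cc_zero)
    qed
  qed
qed



definition Pn :: "real \<Rightarrow> nat \<Rightarrow> real \<Rightarrow> real" where
  "Pn a n y = (\<Sum>k\<le>n. (-1) ^ (n + k) * cc a n k * y powr (real k * a - real n))"

definition Dn :: "real \<Rightarrow> nat \<Rightarrow> real \<Rightarrow> real" where
  "Dn a n y = exp (- (y powr a)) * (if n = 0 then 1 else Pn a n y)"

lemma Pn_0: "y > 0 \<Longrightarrow> Pn a 0 y = 1"
  by (simp add: Pn_def cc_0)

lemma Dn_pos: "y > 0 \<Longrightarrow> Dn a n y = exp (- (y powr a)) * Pn a n y"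
  by (simp add: Dn_def Pn_0)

lemma Pn_comb:
  fixes t :: "nat \<Rightarrow> real"
  shows "(\<Sum>k\<le>n. (-1) ^ (n + k) * cc a n k * ((real k * a - real n) * t k))
       - a * (\<Sum>k\<le>n. (-1) ^ (n + k) * cc a n k * t (Suc k))
     = - (\<Sum>k\<le>Suc n. (-1) ^ (Suc n + k) * cc a (Suc n) k * t k)"
proof -
  have "(\<Sum>k\<le>Suc n. (-1) ^ (Suc n + k) * cc a (Suc n) k * t k)
      = (\<Sum>k\<le>Suc n. - ((-1) ^ (n + k) * cc a n k * ((real k * a - real n) * t k))
        + (if k = 0 then 0 else - ((-1) ^ (n + k) * a * cc a n (k - 1) * t k)))"
  proof (rule sum.cong[OF refl])
    fix k
    have p: "(-1::real) ^ (Suc n + k) = - ((-1) ^ (n + k))" by simp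
    show "(-1) ^ (Suc n + k) * cc a (Suc n) k * t k = - ((-1) ^ (n + k) * cc a n k * ((real k * a - real n) * t k))
        + (if k = 0 then 0 else - ((-1) ^ (n + k) * a * cc a n (k - 1) * t k))"
      unfolding p cc_rec[of a n k] by (simp add: algebra_simps)
  qed
  also have "\<dots> = (\<Sum>k\<le>Suc n. - ((-1) ^ (n + k) * cc a n k * ((real k * a - real n) * t k)))
        + (\<Sum>k\<le>Suc n. (if k = 0 then 0 else - ((-1) ^ (n + k) * a * cc a n (k - 1) * t k)))"
    by (rule sum.distrib)
  also have "(\<Sum>k\<le>Suc n. - ((-1) ^ (n + k) * cc a n k * ((real k * a - real n) * t k)))
      = - (\<Sum>k\<le>n. (-1) ^ (n + k) * cc a n k * ((real k * a - real n) * t k))"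
    by (simp add: cc_zero sum_negf)
  also have "(\<Sum>k\<le>Suc n. (if k = 0 then 0 else - ((-1) ^ (n + k) * a * cc a n (k - 1) * t k)))
      = a * (\<Sum>k\<le>n. (-1) ^ (n + k) * cc a n k * t (Suc k))"
    by (subst sum.atMost_Suc_shift) (simp add: sum_distrib_left algebra_simps)
  finally show ?thesis by simp
qed

lemma Pn_deriv:
  assumes "y > 0"
  shows "(Pn a n has_real_derivative
     (\<Sum>k\<le>n. (-1) ^ (n + k) * cc a n k * ((real k * a - real n) * y powr (real k * a - real n - 1)))) (at y)"
  unfolding Pn_def using assms
  by (auto intro!: derivative_eq_intros sum.cong)

lemma expP_deriv:
  assumes y: "y > 0"
  shows "((\<lambda>y. exp (- (y powr a)) * Pn a n y) has_real_derivative
      - (exp (- (y powr a)) * Pn a (Suc n) y)) (at y)"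
proof -
  define t where "t k = y powr (real k * a - real n - 1)" for k
  have t1: "y powr (real k * a - real n - 1) = t k" for k by (simp add: t_def)
  have t2: "y powr (a - 1) * y powr (real k * a - real n) = t (Suc k)" for k
    using y by (simp add: t_def flip: powr_add) (simp add: algebra_simps)
  have t3: "Pn a (Suc n) y = (\<Sum>k\<le>Suc n. (-1) ^ (Suc n + k) * cc a (Suc n) k * t k)"
    by (simp add: Pn_def t_def algebra_simps)
  have e: "y powr (a - 1) * Pn a n y = (\<Sum>k\<le>n. (-1) ^ (n + k) * cc a n k * t (Suc k))"
    by (simp add: Pn_def sum_distrib_left flip: t2) (simp add: algebra_simps)
  have "((\<lambda>y. exp (- (y powr a)) * Pn a n y) has_real_derivative
      exp (- (y powr a)) * (- (a * y powr (a - 1))) * Pn a n y + exp (- (y powr a)) *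
      (\<Sum>k\<le>n. (-1) ^ (n + k) * cc a n k * ((real k * a - real n) * y powr (real k * a - real n - 1)))) (at y)"
    using y by (auto intro!: derivative_eq_intros Pn_deriv)
  moreover have "exp (- (y powr a)) * (- (a * y powr (a - 1))) * Pn a n y + exp (- (y powr a)) *
      (\<Sum>k\<le>n. (-1) ^ (n + k) * cc a n k * ((real k * a - real n) * y powr (real k * a - real n - 1)))
      = exp (- (y powr a)) * ((\<Sum>k\<le>n. (-1) ^ (n + k) * cc a n k * ((real k * a - real n) * t k))
       - a * (y powr (a - 1) * Pn a n y))"
    unfolding t1 by (simp add: algebra_simps)
  moreover have "\<dots> = - (exp (- (y powr a)) * Pn a (Suc n) y)"
    unfolding e t3 Pn_comb by (simp only: mult_minus_right)
  ultimately show ?thesis by simp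
qed

lemma Dn_deriv:
  assumes "y > 0"
  shows "(Dn a n has_real_derivative - Dn a (Suc n) y) (at y)"
proof -
  have "((\<lambda>y. exp (- (y powr a)) * Pn a n y) has_real_derivative - Dn a (Suc n) y) (at y)"
    using expP_deriv[OF assms] assms by (simp add: Dn_pos)
  then show ?thesis
    by (rule has_field_derivative_transform_within_open[where S = "{0<..}"]) (use assms in \<open>auto simp: Dn_pos\<close>)
qed

lemma Dn_nonneg:
  assumes "0 < a" "a \<le> 1" "y > 0"
  shows "0 \<le> Dn a n y"
proof -
  have "0 \<le> Pn a n y" unfolding Pn_def
    by (intro sum_nonneg mult_nonneg_nonneg cc_sign assms) auto
  then show ?thesis using assms by (simp add: Dn_pos)
qed

lemma Dn_measurable[measurable]: "Dn a n \<in> borel_measurable borel"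
  unfolding Dn_def Pn_def by measurable

lemma powr_at_top_lim:
  assumes "a > 0"
  shows "filterlim (\<lambda>y::real. y powr a) at_top at_top"
proof -
  have "filterlim (\<lambda>y::real. exp (a * ln y)) at_top at_top"
    by (intro filterlim_compose[OF exp_at_top] filterlim_tendsto_pos_mult_at_top[OF tendsto_const assms ln_at_top])
  moreover have "eventually (\<lambda>y. exp (a * ln y) = y powr a) at_top"
    using eventually_gt_at_top[of 0] by eventually_elim (simp add: powr_def)
  ultimately show ?thesis using filterlim_cong by fastforce
qed

lemma lim_term:
  fixes a r :: real
  assumes "a > 0"
  shows "((\<lambda>y::real. exp (- (y powr a)) * y powr r) \<longlongrightarrow> 0) at_top"
proof -
  define m where "m = nat \<lceil>r / a\<rceil>"
  have rm: "r \<le> a * real m"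
  proof -
    have "r / a \<le> real m" unfolding m_def by linarith
    then show ?thesis using assms by (simp add: field_simps)
  qed
  have ev1: "eventually (\<lambda>y. (\<lambda>_. 0::real) y \<le> exp (- (y powr a)) * y powr r) at_top" by simp
  have ev2: "eventually (\<lambda>y. exp (- (y powr a)) * y powr r \<le> (y powr a) ^ m / exp (y powr a)) at_top"
    using eventually_ge_at_top[of "1::real"]
  proof eventually_elim
    case (elim y)
    have "y powr r \<le> y powr (a * real m)" using elim rm by (intro powr_mono) auto
    also have "\<dots> = (y powr a) ^ m" using elim by (simp add: powr_powr[symmetric] powr_realpow)
    finally show ?case by (simp add: exp_minus field_simps)
  qed
  have l2: "((\<lambda>y. (y powr a) ^ m / exp (y powr a)) \<longlongrightarrow> 0) at_top"
    by (rule filterlim_compose[OF tendsto_power_div_exp_0 powr_at_top_lim[OF assms]])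
  show ?thesis by (rule tendsto_sandwich[OF ev1 ev2 tendsto_const l2])
qed

lemma Dn_lim:
  assumes "a > 0"
  shows "(Dn a n \<longlongrightarrow> 0) at_top"
proof -
  have "((\<lambda>y. \<Sum>k\<le>n. (-1) ^ (n + k) * cc a n k * (exp (- (y powr a)) * y powr (real k * a - real n))) \<longlongrightarrow> 0) at_top"
    using tendsto_sum[of "{..n}" "\<lambda>k y. (-1) ^ (n + k) * cc a n k * (exp (- (y powr a)) * y powr (real k * a - real n))" "\<lambda>_. 0"]
      tendsto_mult[OF tendsto_const lim_term[OF assms]] by simp
  moreover have "eventually (\<lambda>y. (\<Sum>k\<le>n. (-1) ^ (n + k) * cc a n k * (exp (- (y powr a)) * y powr (real k * a - real n))) = Dn a n y) at_top"
    using eventually_gt_at_top[of 0]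
    by eventually_elim (simp add: Dn_pos Pn_def sum_distrib_left algebra_simps)
  ultimately show ?thesis using tendsto_cong by fastforce
qed

lemma Dn0_right:
  assumes "a > 0"
  shows "(Dn a 0 \<longlongrightarrow> 1) (at_right 0)"
proof -
  have "((\<lambda>y::real. y powr a) \<longlongrightarrow> 0) (at_right 0)"
    by (rule tendsto_zero_powrI[of "\<lambda>y. y" _ "\<lambda>_. a" a]) (auto intro: tendsto_ident_at eventually_at_rightI[of _ 1] simp: assms)
  then have "((\<lambda>y::real. exp (- (y powr a))) \<longlongrightarrow> exp (- 0)) (at_right 0)"
    by (intro tendsto_intros)
  moreover have "Dn a 0 = (\<lambda>y. exp (- (y powr a)))" by (simp add: fun_eq_iff Dn_def)
  ultimately show ?thesis by simp
qed



lemma int1_0: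
  assumes a: "0 < a" "a \<le> 1" and c: "0 \<le> c" "0 < c \<or> j = 0"
  shows "(\<integral>\<^sup>+u. indicator {c<..} u * ennreal (Dn a (Suc j) u) \<partial>lborel) = ennreal (Dn a j c)"
proof -
  have lim_c: "(Dn a j \<longlongrightarrow> Dn a j c) (at_right c)"
  proof (cases "c > 0")
    case True
    have "isCont (Dn a j) c" by (rule DERIV_isCont[OF Dn_deriv[OF True]])
    then have "(Dn a j \<longlongrightarrow> Dn a j c) (at c)" by (simp add: isCont_def)
    then show ?thesis by (rule tendsto_mono[OF at_within_le_at])
  next
    case False
    then have "c = 0" "j = 0" using c by auto
    moreover have "Dn a 0 0 = 1" using a by (simp add: Dn_def)
    ultimately show ?thesis using Dn0_right[OF a(1)] by simp
  qed
  have h1: "ereal c < \<infinity>" by simp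
  have h2: "((\<lambda>u. - Dn a j u) has_real_derivative Dn a (Suc j) x) (at x)"
    if "ereal c < ereal x" "ereal x < \<infinity>" for x
  proof -
    have "x > 0" using that c by auto
    from DERIV_minus[OF Dn_deriv[OF this, of a j]] show ?thesis by simp
  qed
  have h3: "isCont (Dn a (Suc j)) x" if "ereal c < ereal x" "ereal x < \<infinity>" for x
  proof -
    have "x > 0" using that c by auto
    then show ?thesis by (rule DERIV_isCont[OF Dn_deriv])
  qed
  have h4: "AE x in lborel. ereal c < ereal x \<longrightarrow> ereal x < \<infinity> \<longrightarrow> 0 \<le> Dn a (Suc j) x"
    using c a by (intro AE_I2) (auto intro!: Dn_nonneg)
  have h5: "(((\<lambda>u. - Dn a j u) \<circ> real_of_ereal) \<longlongrightarrow> - Dn a j c) (at_right (ereal c))"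
    unfolding ereal_tendsto_simps by (intro tendsto_minus lim_c)
  have h6: "(((\<lambda>u. - Dn a j u) \<circ> real_of_ereal) \<longlongrightarrow> 0) (at_left \<infinity>)"
    unfolding ereal_tendsto_simps using tendsto_minus[OF Dn_lim[OF a(1), of j]] by simp
  note FTC = interval_integral_FTC_nonneg[OF h1 h2 h3 h4 h5 h6]
  have ei: "einterval (ereal c) \<infinity> = {c<..}" by (auto simp: einterval_def)
  have int: "integrable lborel (\<lambda>u. indicator {c<..} u *\<^sub>R Dn a (Suc j) u)"
    using FTC(1) unfolding ei set_integrable_def .
  have val: "integral\<^sup>L lborel (\<lambda>u. indicator {c<..} u *\<^sub>R Dn a (Suc j) u) = Dn a j c"
    using FTC(2) unfolding interval_lebesgue_integral_def ei set_lebesgue_integral_def by simp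
  have "(\<integral>\<^sup>+u. indicator {c<..} u * ennreal (Dn a (Suc j) u) \<partial>lborel)
      = (\<integral>\<^sup>+u. ennreal (indicator {c<..} u *\<^sub>R Dn a (Suc j) u) \<partial>lborel)"
    by (intro nn_integral_cong) (auto split: split_indicator)
  also have "\<dots> = ennreal (integral\<^sup>L lborel (\<lambda>u. indicator {c<..} u *\<^sub>R Dn a (Suc j) u))"
    using int c a by (intro nn_integral_eq_integral AE_I2) (auto split: split_indicator intro!: Dn_nonneg)
  finally show ?thesis using val by simp
qed

lemma int1:
  assumes a: "0 < a" "a \<le> 1" and c: "0 \<le> s + b" "0 < s + b \<or> j = 0"
  shows "(\<integral>\<^sup>+y. indicator {b<..} y * ennreal (Dn a (Suc j) (s + y)) \<partial>lborel) = ennreal (Dn a j (s + b))"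
proof -
  have m: "(\<lambda>u. indicator {s+b<..} u * ennreal (Dn a (Suc j) u)) \<in> borel_measurable borel" by measurable
  have "(\<integral>\<^sup>+u. indicator {s+b<..} u * ennreal (Dn a (Suc j) u) \<partial>lborel)
     = (\<integral>\<^sup>+y. indicator {s+b<..} (s + 1 * y) * ennreal (Dn a (Suc j) (s + 1 * y)) \<partial>lborel)"
    using nn_integral_real_affine[OF m, of 1 s] by simp
  also have "\<dots> = (\<integral>\<^sup>+y. indicator {b<..} y * ennreal (Dn a (Suc j) (s + y)) \<partial>lborel)"
    by (auto intro!: nn_integral_cong split: split_indicator)
  finally show ?thesis using int1_0[OF a c] by simp
qed



lemma psf: "product_sigma_finite (\<lambda>_::nat. lborel::real measure)"
  unfolding product_sigma_finite_def by (simp add: sigma_finite_lborel)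

interpretation PL: product_sigma_finite "\<lambda>_::nat. lborel::real measure"
  by (rule psf)

abbreviation PM :: "nat \<Rightarrow> (nat \<Rightarrow> real) measure" where
  "PM m \<equiv> PiM {..<m} (\<lambda>_. lborel)"

lemma nn_integral_PM_Suc:
  assumes "f \<in> borel_measurable (PM (Suc m))"
  shows "(\<integral>\<^sup>+x. f x \<partial>PM (Suc m)) = (\<integral>\<^sup>+x. (\<integral>\<^sup>+y. f (x(m := y)) \<partial>lborel) \<partial>PM m)"
proof -
  have "{..<Suc m} = insert m {..<m}" by auto
  then show ?thesis using PL.product_nn_integral_insert[of "{..<m}" m f] assms by simp
qed

lemma nn_integral_PM_0: "(\<integral>\<^sup>+x. f x \<partial>PM 0) = f (\<lambda>_. undefined)"
  by (simp add: PiM_empty nn_integral_count_space_finite)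

lemma box:
  assumes a: "0 < a" "a \<le> 1" and b: "\<And>i. 0 \<le> b i"
  assumes c: "0 \<le> c" "k = 0 \<or> 0 < c"
  shows "(\<integral>\<^sup>+x. (\<Prod>i<m. indicator {b i<..} (x i)) * ennreal (Dn a (k + m) (c + (\<Sum>i<m. x i))) \<partial>PM m)
       = ennreal (Dn a k (c + (\<Sum>i<m. b i)))"
  using c
proof (induction m arbitrary: c)
  case 0
  then show ?case by (simp only: nn_integral_PM_0) simp
next
  case (Suc m)
  define f where "f x = (\<Prod>i<Suc m. indicator {b i<..} (x i)) * ennreal (Dn a (k + Suc m) (c + (\<Sum>i<Suc m. x i)))"
    for x :: "nat \<Rightarrow> real"
  have fm: "f \<in> borel_measurable (PM (Suc m))" unfolding f_def by measurable
  have upd: "f (x(m := y)) = (\<Prod>i<m. indicator {b i<..} (x i)) *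
      (indicator {b m<..} y * ennreal (Dn a (Suc (k + m)) ((c + (\<Sum>i<m. x i)) + y)))" for x y
  proof -
    have "(\<Prod>i<m. indicator {b i<..} ((x(m := y)) i)) = (\<Prod>i<m. indicator {b i<..} (x i) :: ennreal)"
      by (intro prod.cong) auto
    moreover have "(\<Sum>i<m. (x(m := y)) i) = (\<Sum>i<m. x i)" by (intro sum.cong) auto
    ultimately show ?thesis unfolding f_def by (simp add: algebra_simps)
  qed
  have inner: "(\<integral>\<^sup>+y. f (x(m := y)) \<partial>lborel) =
      (\<Prod>i<m. indicator {b i<..} (x i)) * ennreal (Dn a (k + m) ((c + b m) + (\<Sum>i<m. x i)))" for x
  proof (cases "\<forall>i<m. b i < x i")
    case True
    then have p: "(\<Prod>i<m. indicator {b i<..} (x i)) = (1::ennreal)" by (intro prod.neutral) auto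
    have xnn: "0 \<le> x i" if "i < m" for i
    proof -
      have "b i < x i" using True that by auto
      then show ?thesis using b[of i] by linarith
    qed
    have s0: "0 \<le> (\<Sum>i<m. x i)" using xnn by (intro sum_nonneg) auto
    have cond: "0 < c + (\<Sum>i<m. x i) + b m \<or> k + m = 0"
    proof (cases m)
      case 0 then show ?thesis using Suc.prems b[of 0] by auto
    next
      case (Suc m')
      have "b 0 < x 0" using True Suc by auto
      then have "0 < x 0" using b[of 0] by linarith
      moreover have "x 0 \<le> (\<Sum>i<m. x i)"
        using xnn Suc by (intro member_le_sum) auto
      ultimately show ?thesis using Suc.prems b[of m] by auto
    qed
    have "(\<integral>\<^sup>+y. f (x(m := y)) \<partial>lborel) =
        (\<integral>\<^sup>+y. indicator {b m<..} y * ennreal (Dn a (Suc (k + m)) ((c + (\<Sum>i<m. x i)) + y)) \<partial>lborel)"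
      unfolding upd p by simp
    also have "\<dots> = ennreal (Dn a (k + m) ((c + (\<Sum>i<m. x i)) + b m))"
      by (rule int1[OF a]) (use s0 Suc.prems b[of m] cond in auto)
    finally show ?thesis unfolding p by (simp add: algebra_simps)
  next
    case False
    then obtain i where i: "i < m" "\<not> b i < x i" by auto
    then have p: "(\<Prod>i<m. indicator {b i<..} (x i)) = (0::ennreal)"
      by (intro prod_zero) (auto intro!: bexI[of _ i])
    show ?thesis unfolding upd p by simp
  qed
  have "(\<integral>\<^sup>+x. f x \<partial>PM (Suc m)) = (\<integral>\<^sup>+x. (\<Prod>i<m. indicator {b i<..} (x i)) *
      ennreal (Dn a (k + m) ((c + b m) + (\<Sum>i<m. x i))) \<partial>PM m)"
    unfolding nn_integral_PM_Suc[OF fm] inner ..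
  also have "\<dots> = ennreal (Dn a k ((c + b m) + (\<Sum>i<m. b i)))"
    by (rule Suc.IH) (use Suc.prems b[of m] in auto)
  finally show ?case unfolding f_def by (simp add: algebra_simps)
qed



lemma pred_gt1[measurable]: "Measurable.pred borel (\<lambda>x::real. x \<in> {s<..})"
  by (simp add: greaterThan_iff) measurable

lemma pred_gt2[measurable]: "Measurable.pred (borel \<Otimes>\<^sub>M borel) (\<lambda>x::real\<times>real. fst x \<in> {snd x<..})"
  by (simp add: greaterThan_iff) measurable

lemma pred_lt1[measurable]: "Measurable.pred borel (\<lambda>x::real. x \<in> {..<s})"
  by (simp add: lessThan_iff) measurable

lemma inner_poly:
  fixes u :: real
  shows "(\<integral>\<^sup>+s. indicator {0<..} s * ennreal (s ^ m / fact m) * indicator {..<u} s \<partial>lborel)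
     = indicator {0<..} u * ennreal (u ^ Suc m / fact (Suc m))"
proof (cases "u > 0")
  case True
  have "(\<integral>\<^sup>+s. indicator {0<..} s * ennreal (s ^ m / fact m) * indicator {..<u} s \<partial>lborel)
      = (\<integral>\<^sup>+s. ennreal (s ^ m / fact m) * indicator {0..u} s \<partial>lborel)"
  proof (rule nn_integral_cong_AE)
    show "AE s in lborel. indicator {0<..} s * ennreal (s ^ m / fact m) * indicator {..<u} s
        = ennreal (s ^ m / fact m) * indicator {0..u} s"
      using AE_lborel_singleton[of 0] AE_lborel_singleton[of u]
      by eventually_elim (auto split: split_indicator)
  qed
  also have "\<dots> = ennreal (u ^ Suc m / fact (Suc m) - 0 ^ Suc m / fact (Suc m))"
  proof (rule nn_integral_FTC_Icc)
    show "(\<lambda>s::real. s ^ m / fact m) \<in> borel_measurable borel" by measurable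
    show "((\<lambda>s. s ^ Suc m / fact (Suc m)) has_real_derivative x ^ m / fact m) (at x)" for x :: real
    proof -
      have "((\<lambda>s. s ^ Suc m) has_real_derivative real (Suc m) * x ^ m) (at x)"
        using DERIV_pow[of "Suc m" x] by simp
      from DERIV_cdivide[OF this, of "fact (Suc m)"]
      have d: "((\<lambda>s. s ^ Suc m / fact (Suc m)) has_real_derivative real (Suc m) * x ^ m / fact (Suc m)) (at x)" .
      have "fact (Suc m) = real (Suc m) * (fact m :: real)" by simp
      then have "real (Suc m) * x ^ m / fact (Suc m) = x ^ m / fact m"
        by (simp only: mult_divide_mult_cancel_left_if) simp
      with d show ?thesis by simp
    qed
    show "0 \<le> x ^ m / fact m" if "x \<in> {0..u}" for x :: real using that by simp
  qed (use True in auto)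
  finally show ?thesis using True by simp
next
  case False
  then have "(\<lambda>s. indicator {0<..} s * ennreal (s ^ m / fact m) * indicator {..<u} s) = (\<lambda>_. 0::ennreal)"
    by (auto simp: fun_eq_iff split: split_indicator)
  then show ?thesis using False by simp
qed

lemma shift_int:
  fixes s :: real and K :: "real \<Rightarrow> ennreal"
  assumes [measurable]: "K \<in> borel_measurable borel"
  shows "(\<integral>\<^sup>+y. indicator {0<..} y * K (s + y) \<partial>lborel) = (\<integral>\<^sup>+u. indicator {s<..} u * K u \<partial>lborel)"
proof -
  have m: "(\<lambda>u. indicator {s<..} u * K u) \<in> borel_measurable borel"
    by (intro borel_measurable_times_ennreal borel_measurable_indicator assms) simp
  have "(\<integral>\<^sup>+u. indicator {s<..} u * K u \<partial>lborel) = (\<integral>\<^sup>+y. indicator {s<..} (s + 1 * y) * K (s + 1 * y) \<partial>lborel)"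
    using nn_integral_real_affine[OF m, of 1 s] by simp
  also have "\<dots> = (\<integral>\<^sup>+y. indicator {0<..} y * K (s + y) \<partial>lborel)"
    by (auto intro!: nn_integral_cong split: split_indicator)
  finally show ?thesis ..
qed

lemma conv_step:
  fixes K :: "real \<Rightarrow> ennreal"
  assumes [measurable]: "K \<in> borel_measurable borel"
  shows "(\<integral>\<^sup>+s. indicator {0<..} s * ennreal (s ^ m / fact m) * (\<integral>\<^sup>+y. indicator {0<..} y * K (s + y) \<partial>lborel) \<partial>lborel)
       = (\<integral>\<^sup>+u. indicator {0<..} u * ennreal (u ^ Suc m / fact (Suc m)) * K u \<partial>lborel)"
proof -
  have [measurable]: "K \<in> borel_measurable lborel" using assms by simp
  define g where "g s u = indicator {0<..} s * ennreal (s ^ m / fact m) * (indicator {s<..} u * K u)" for s u :: real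
  have gm: "case_prod (\<lambda>x y. g y x) \<in> borel_measurable (lborel \<Otimes>\<^sub>M lborel)"
    unfolding g_def by measurable
  have "(\<integral>\<^sup>+s. indicator {0<..} s * ennreal (s ^ m / fact m) * (\<integral>\<^sup>+y. indicator {0<..} y * K (s + y) \<partial>lborel) \<partial>lborel)
      = (\<integral>\<^sup>+s. (\<integral>\<^sup>+u. g s u \<partial>lborel) \<partial>lborel)"
    unfolding shift_int[OF assms] g_def by (intro nn_integral_cong) (simp add: nn_integral_cmult)
  also have "\<dots> = (\<integral>\<^sup>+u. (\<integral>\<^sup>+s. g s u \<partial>lborel) \<partial>lborel)"
    using lborel_pair.Fubini'[OF gm] by simp
  also have "\<dots> = (\<integral>\<^sup>+u. K u * (\<integral>\<^sup>+s. indicator {0<..} s * ennreal (s ^ m / fact m) * indicator {..<u} s \<partial>lborel) \<partial>lborel)"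
  proof (intro nn_integral_cong)
    fix u :: real
    have "(\<integral>\<^sup>+s. g s u \<partial>lborel) = (\<integral>\<^sup>+s. K u * (indicator {0<..} s * ennreal (s ^ m / fact m) * indicator {..<u} s) \<partial>lborel)"
      unfolding g_def by (intro nn_integral_cong) (auto simp: mult_ac split: split_indicator)
    also have "\<dots> = K u * (\<integral>\<^sup>+s. indicator {0<..} s * ennreal (s ^ m / fact m) * indicator {..<u} s \<partial>lborel)"
      by (rule nn_integral_cmult) measurable
    finally show "(\<integral>\<^sup>+s. g s u \<partial>lborel) = K u * (\<integral>\<^sup>+s. indicator {0<..} s * ennreal (s ^ m / fact m) * indicator {..<u} s \<partial>lborel)" .
  qed
  also have "\<dots> = (\<integral>\<^sup>+u. indicator {0<..} u * ennreal (u ^ Suc m / fact (Suc m)) * K u \<partial>lborel)"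
    unfolding inner_poly by (simp add: mult_ac)
  finally show ?thesis .
qed

lemma sumdist:
  fixes K :: "real \<Rightarrow> ennreal"
  assumes "K \<in> borel_measurable borel"
  shows "(\<integral>\<^sup>+x. (\<Prod>i<Suc m. indicator {0<..} (x i)) * K (\<Sum>i<Suc m. x i) \<partial>PM (Suc m))
       = (\<integral>\<^sup>+s. indicator {0<..} s * ennreal (s ^ m / fact m) * K s \<partial>lborel)"
  using assms
proof (induction m arbitrary: K)
  case 0
  note [measurable] = 0
  have fm: "(\<lambda>x. (\<Prod>i<Suc 0. indicator {0<..} (x i)) * K (\<Sum>i<Suc 0. x i)) \<in> borel_measurable (PM (Suc 0))"
    by measurable
  show ?case unfolding nn_integral_PM_Suc[OF fm] nn_integral_PM_0 by simp
next
  case (Suc m)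
  note [measurable] = Suc.prems
  define K' where "K' s = (\<integral>\<^sup>+y. indicator {0<..} y * K (s + y) \<partial>lborel)" for s
  have K'm: "K' \<in> borel_measurable borel"
  proof -
    have "case_prod (\<lambda>s y. indicator {0<..} y * K (s + y)) \<in> borel_measurable (borel \<Otimes>\<^sub>M lborel)"
      by measurable
    then show ?thesis unfolding K'_def by (rule lborel.borel_measurable_nn_integral)
  qed
  define f where "f x = (\<Prod>i<Suc (Suc m). indicator {0<..} (x i)) * K (\<Sum>i<Suc (Suc m). x i)"
    for x :: "nat \<Rightarrow> real"
  have fm: "f \<in> borel_measurable (PM (Suc (Suc m)))" unfolding f_def by measurable
  have inner: "(\<integral>\<^sup>+y. f (x(Suc m := y)) \<partial>lborel) = (\<Prod>i<Suc m. indicator {0<..} (x i)) * K' (\<Sum>i<Suc m. x i)" for x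
  proof -
    have p: "(\<Prod>i<Suc m. indicator {0<..} ((x(Suc m := y)) i)) = (\<Prod>i<Suc m. indicator {0<..} (x i) :: ennreal)" for y
      by (intro prod.cong) auto
    have s: "(\<Sum>i<Suc m. (x(Suc m := y)) i) = (\<Sum>i<Suc m. x i)" for y by (intro sum.cong) auto
    have "(\<integral>\<^sup>+y. f (x(Suc m := y)) \<partial>lborel) = (\<integral>\<^sup>+y. (\<Prod>i<Suc m. indicator {0<..} (x i)) *
        (indicator {0<..} y * K ((\<Sum>i<Suc m. x i) + y)) \<partial>lborel)"
      unfolding f_def by (intro nn_integral_cong) (simp add: p s mult_ac)
    also have "\<dots> = (\<Prod>i<Suc m. indicator {0<..} (x i)) * K' (\<Sum>i<Suc m. x i)"
      unfolding K'_def by (rule nn_integral_cmult) measurable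
    finally show ?thesis .
  qed
  have "(\<integral>\<^sup>+x. f x \<partial>PM (Suc (Suc m))) = (\<integral>\<^sup>+x. (\<Prod>i<Suc m. indicator {0<..} (x i)) * K' (\<Sum>i<Suc m. x i) \<partial>PM (Suc m))"
    unfolding nn_integral_PM_Suc[OF fm] inner ..
  also have "\<dots> = (\<integral>\<^sup>+s. indicator {0<..} s * ennreal (s ^ m / fact m) * K' s \<partial>lborel)"
    by (rule Suc.IH[OF K'm])
  also have "\<dots> = (\<integral>\<^sup>+u. indicator {0<..} u * ennreal (u ^ Suc m / fact (Suc m)) * K u \<partial>lborel)"
    unfolding K'_def by (rule conv_step[OF Suc.prems])
  finally show ?case unfolding f_def .
qed



lemma prob_eq_shift:
  fixes M :: "'a measure" and X :: "nat \<Rightarrow> 'a \<Rightarrow> real"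
  assumes P: "prob_space M" and a: "0 < \<alpha>"
    and Xm: "\<And>i. i < n \<Longrightarrow> X i \<in> borel_measurable M"
    and hyp: "\<And>x :: nat \<Rightarrow> real. (\<forall>i<n. x i \<ge> 0) \<Longrightarrow>
           measure M {\<omega> \<in> space M. \<forall>i<n. X i \<omega> > x i} = exp (- ((\<Sum>i<n. x i) powr \<alpha>))"
  shows "measure M {\<omega> \<in> space M. \<forall>i<n. a i < X i \<omega>} = exp (- ((\<Sum>i<n. max (a i) 0) powr \<alpha>))"
proof -
  interpret prob_space M by (rule P)
  have ev: "{\<omega> \<in> space M. \<forall>i<n. c i < X i \<omega>} \<in> sets M" for c
  proof -
    have "{\<omega> \<in> space M. \<forall>i<n. c i < X i \<omega>} = {\<omega> \<in> space M. \<forall>i\<in>{..<n}. c i < X i \<omega>}" by auto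
    also have "\<dots> \<in> sets M"
    proof (rule sets.sets_Collect_finite_All)
      fix i assume "i \<in> {..<n}"
      then have "X i -` {c i<..} \<inter> space M \<in> sets M" using Xm by (intro measurable_sets) auto
      moreover have "X i -` {c i<..} \<inter> space M = {\<omega> \<in> space M. c i < X i \<omega>}" by auto
      ultimately show "{\<omega> \<in> space M. c i < X i \<omega>} \<in> sets M" by simp
    qed simp
    finally show ?thesis .
  qed
  define b where "b i = max (a i) 0" for i
  define Sa where "Sa = {\<omega> \<in> space M. \<forall>i<n. a i < X i \<omega>}"
  define Sb where "Sb = {\<omega> \<in> space M. \<forall>i<n. b i < X i \<omega>}"
  define Pos where "Pos = {\<omega> \<in> space M. \<forall>i<n. (\<lambda>_. 0::real) i < X i \<omega>}"
  have Sa: "Sa \<in> sets M" and Sb: "Sb \<in> sets M" and Pos: "Pos \<in> sets M"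
    unfolding Sa_def Sb_def Pos_def by (rule ev)+
  have "measure M Pos = exp (- ((\<Sum>i<n. (0::real)) powr \<alpha>))"
    unfolding Pos_def using hyp[of "\<lambda>_. 0"] by simp
  then have mPos: "measure M Pos = 1" by simp
  have mc: "measure M (space M - Pos) = 0" using prob_compl[OF Pos] mPos by simp
  have "Sb \<subseteq> Sa" unfolding Sa_def Sb_def b_def by (auto intro: le_less_trans)
  then have le1: "measure M Sb \<le> measure M Sa" using Sa by (rule finite_measure_mono)
  have "Sa \<subseteq> Sb \<union> (space M - Pos)" unfolding Sa_def Sb_def Pos_def b_def by auto
  then have "measure M Sa \<le> measure M (Sb \<union> (space M - Pos))"
    using Sb Pos by (intro finite_measure_mono) auto
  also have "\<dots> \<le> measure M Sb + measure M (space M - Pos)"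
    using Sb Pos by (intro measure_Un_le) auto
  finally have "measure M Sa = measure M Sb" using le1 mc by simp
  also have "measure M Sb = exp (- ((\<Sum>i<n. b i) powr \<alpha>))"
    unfolding Sb_def by (rule hyp) (simp add: b_def)
  finally show ?thesis unfolding Sa_def b_def .
qed

theorem theorem8:
  fixes M :: "'a measure" and X :: "nat \<Rightarrow> 'a \<Rightarrow> real" and n :: nat and \<alpha> :: real
  assumes "prob_space M"
    and "0 < \<alpha>" and "\<alpha> \<le> 1"
    and "n \<ge> 1"
    and "\<And>i. i < n \<Longrightarrow> X i \<in> borel_measurable M"
    and "\<And>x :: nat \<Rightarrow> real. (\<forall>i<n. x i \<ge> 0) \<Longrightarrow>
           measure M {\<omega> \<in> space M. \<forall>i<n. X i \<omega> > x i} = exp (- ((\<Sum>i<n. x i) powr \<alpha>))"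
  shows "distributed M lborel (\<lambda>\<omega>. \<Sum>i<n. X i \<omega>)
           (\<lambda>x. ennreal (if x > 0 then
              x ^ (n - 1) / Gamma (real n) *
              (\<Sum>k=1..n. (-1) ^ (n + k) * exp (- (x powr \<alpha>)) *
                 bell_partial n k (\<lambda>j. falling_fact \<alpha> j * x powr (\<alpha> - real j)))
            else 0))"
proof -
  interpret P: prob_space M by (rule assms(1))
  note a = assms(2,3)
  obtain m where n: "n = Suc m" using assms(4) by (cases n) auto
  define Xv where "Xv \<omega> = (\<lambda>i\<in>{..<n}. X i \<omega>)" for \<omega>
  have Xvm: "Xv \<in> measurable M (PM n)" unfolding Xv_def
    by (rule measurable_restrict) (use assms(5) in auto)
  define H where "H x = (\<Prod>i<n. indicator {0<..} (x i)) * ennreal (Dn \<alpha> n (\<Sum>i<n. x i))"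
    for x :: "nat \<Rightarrow> real"
  have Hm[measurable]: "H \<in> borel_measurable (PM n)" unfolding H_def by measurable
  define \<Omega> where "\<Omega> = PiE {..<n} (\<lambda>_::nat. UNIV::real set)"
  have sp: "space (PM n) = \<Omega>" by (simp add: space_PiM \<Omega>_def)
  define G where "G = {{f \<in> \<Omega>. \<forall>i\<in>{..<n}. f i \<in> A i} | A. A \<in> Pi {..<n} (\<lambda>_. range greaterThan)}"
  have GP: "G \<subseteq> Pow \<Omega>" unfolding G_def by auto
  have setsG: "sets (PM n) = sigma_sets \<Omega> G"
  proof -
    have "sets (PM n) = sets (PiM {..<n} (\<lambda>_. sigma (UNIV::real set) (range greaterThan)))"
      by (rule sets_PiM_cong) (simp_all add: borel_Ioi[symmetric])
    also have "\<dots> = sets (sigma (PiE {..<n} (\<lambda>_. UNIV::real set))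
        {{f\<in>(PiE {..<n} (\<lambda>_. UNIV::real set)). \<forall>i\<in>j. f i \<in> A i} | A j. j \<in> {{..<n}} \<and> A \<in> Pi j (\<lambda>_. range greaterThan)})"
    proof (rule sets_PiM_sigma)
      fix i :: nat
      show "\<exists>S\<subseteq>range greaterThan. countable S \<and> (UNIV::real set) = \<Union>S"
      proof (intro exI conjI)
        show "range (\<lambda>j::nat. {- real j <..}) \<subseteq> range greaterThan" by auto
        show "countable (range (\<lambda>j::nat. {- real j <..}))" by simp
        show "(UNIV::real set) = \<Union>(range (\<lambda>j::nat. {- real j <..}))"
        proof (safe)
          fix x :: real
          obtain j :: nat where "- x < real j" using reals_Archimedean2 by blast
          then show "x \<in> \<Union>(range (\<lambda>j::nat. {- real j <..}))" by (intro UN_I[of j]) auto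
        qed auto
      qed
    qed auto
    also have "{{f\<in>(PiE {..<n} (\<lambda>_. UNIV::real set)). \<forall>i\<in>j. f i \<in> A i} | A j. j \<in> {{..<n}} \<and> A \<in> Pi j (\<lambda>_. range greaterThan)} = G"
      unfolding G_def \<Omega>_def by blast
    also have "sets (sigma (PiE {..<n} (\<lambda>_::nat. UNIV::real set)) G) = sigma_sets \<Omega> G"
      using GP unfolding \<Omega>_def by simp
    finally show ?thesis .
  qed
  have GS: "G \<subseteq> sets (PM n)" unfolding setsG by auto
  have AG: "{f \<in> \<Omega>. \<forall>i\<in>{..<n}. f i \<in> {- real j<..}} \<in> G" for j
    unfolding G_def by (rule CollectI, rule exI[of _ "\<lambda>i. {- real j<..}"]) auto
  have dist_eq: "distr M (PM n) Xv = density (PM n) H"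
  proof (rule measure_eqI_generator_eq[where E = G and \<Omega> = \<Omega> and A = "\<lambda>j. {f \<in> \<Omega>. \<forall>i\<in>{..<n}. f i \<in> {- real j<..}}"])
    show "Int_stable G"
    proof (rule Int_stableI)
      fix S T assume "S \<in> G" "T \<in> G"
      then obtain A B where A: "A \<in> Pi {..<n} (\<lambda>_. range greaterThan)" "S = {f \<in> \<Omega>. \<forall>i\<in>{..<n}. f i \<in> A i}"
        and B: "B \<in> Pi {..<n} (\<lambda>_. range greaterThan)" "T = {f \<in> \<Omega>. \<forall>i\<in>{..<n}. f i \<in> B i}"
        unfolding G_def by auto
      have "S \<inter> T = {f \<in> \<Omega>. \<forall>i\<in>{..<n}. f i \<in> A i \<inter> B i}" using A B by auto
      moreover have "(\<lambda>i. A i \<inter> B i) \<in> Pi {..<n} (\<lambda>_. range greaterThan)"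
      proof
        fix i assume "i \<in> {..<n}"
        then have "A i \<in> range greaterThan" "B i \<in> range greaterThan" using A(1) B(1) by auto
        then obtain x y where "A i = {x<..}" "B i = {y<..}" by blast
        then have "A i \<inter> B i = {max x y<..}" by auto
        then show "A i \<inter> B i \<in> range greaterThan" by auto
      qed
      ultimately show "S \<inter> T \<in> G" unfolding G_def
        by (intro CollectI exI[of _ "\<lambda>i. A i \<inter> B i"]) simp
    qed
    show "G \<subseteq> Pow \<Omega>" by (rule GP)
    show "sets (distr M (PM n) Xv) = sigma_sets \<Omega> G" using setsG by simp
    show "sets (density (PM n) H) = sigma_sets \<Omega> G" using setsG by simp
    show "range (\<lambda>j. {f \<in> \<Omega>. \<forall>i\<in>{..<n}. f i \<in> {- real j<..}}) \<subseteq> G"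
      using AG by blast
    show "(\<Union>j. {f \<in> \<Omega>. \<forall>i\<in>{..<n}. f i \<in> {- real j<..}}) = \<Omega>"
    proof safe
      fix f assume f: "f \<in> \<Omega>"
      obtain j :: nat where j: "(\<Sum>i<n. \<bar>f i\<bar>) < real j" using reals_Archimedean2 by blast
      have "\<forall>i\<in>{..<n}. f i \<in> {- real j<..}"
      proof
        fix i assume "i \<in> {..<n}"
        then have "\<bar>f i\<bar> \<le> (\<Sum>i<n. \<bar>f i\<bar>)" by (intro member_le_sum) auto
        then show "f i \<in> {- real j<..}" using j by auto
      qed
      then show "f \<in> (\<Union>j. {f \<in> \<Omega>. \<forall>i\<in>{..<n}. f i \<in> {- real j<..}})" using f by blast
    qed
    show "emeasure (distr M (PM n) Xv) {f \<in> \<Omega>. \<forall>i\<in>{..<n}. f i \<in> {- real j<..}} \<noteq> \<infinity>" for j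
    proof -
      have "{f \<in> \<Omega>. \<forall>i\<in>{..<n}. f i \<in> {- real j<..}} \<in> sets (PM n)"
        using GS AG by blast
      then show ?thesis using Xvm by (simp add: emeasure_distr P.emeasure_finite)
    qed
    fix S assume "S \<in> G"
    then obtain A where A: "A \<in> Pi {..<n} (\<lambda>_. range greaterThan)" and S: "S = {f \<in> \<Omega>. \<forall>i\<in>{..<n}. f i \<in> A i}"
      unfolding G_def by auto
    have "\<forall>i\<in>{..<n}. \<exists>c. A i = {c<..}" using A by auto
    then obtain a0 where a0: "\<And>i. i \<in> {..<n} \<Longrightarrow> A i = {a0 i<..}" by metis
    define b where "b i = max (a0 i) 0" for i
    have SG: "S \<in> sets (PM n)" using GS \<open>S \<in> G\<close> by auto
    have "emeasure (distr M (PM n) Xv) S = emeasure M (Xv -` S \<inter> space M)"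
      using Xvm SG by (rule emeasure_distr)
    also have "Xv -` S \<inter> space M = {\<omega> \<in> space M. \<forall>i<n. a0 i < X i \<omega>}"
      unfolding S Xv_def \<Omega>_def using a0 by auto
    also have "emeasure M {\<omega> \<in> space M. \<forall>i<n. a0 i < X i \<omega>} = ennreal (exp (- ((\<Sum>i<n. b i) powr \<alpha>)))"
      using prob_eq_shift[OF assms(1) a(1) assms(5) assms(6), of a0] P.emeasure_eq_measure
      unfolding b_def by simp
    also have "\<dots> = ennreal (Dn \<alpha> 0 (0 + (\<Sum>i<n. b i)))" by (simp add: Dn_def)
    also have "\<dots> = (\<integral>\<^sup>+x. (\<Prod>i<n. indicator {b i<..} (x i)) * ennreal (Dn \<alpha> (0 + n) (0 + (\<Sum>i<n. x i))) \<partial>PM n)"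
      by (rule box[symmetric]) (use a in \<open>auto simp: b_def\<close>)
    also have "\<dots> = (\<integral>\<^sup>+x. H x * indicator S x \<partial>PM n)"
    proof (rule nn_integral_cong)
      fix x assume "x \<in> space (PM n)"
      then have x\<Omega>: "x \<in> \<Omega>" using sp by simp
      show "(\<Prod>i<n. indicator {b i<..} (x i)) * ennreal (Dn \<alpha> (0 + n) (0 + (\<Sum>i<n. x i))) = H x * indicator S x"
      proof (cases "\<forall>i<n. b i < x i")
        case True
        then have "x \<in> S" using x\<Omega> a0 unfolding S b_def by auto
        moreover have "(\<Prod>i<n. indicator {b i<..} (x i)) = (1::ennreal)" using True by (intro prod.neutral) auto
        moreover have "(\<Prod>i<n. indicator {0<..} (x i)) = (1::ennreal)"
          using True by (intro prod.neutral) (auto simp: b_def intro: le_less_trans)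
        ultimately show ?thesis unfolding H_def by simp
      next
        case False
        then obtain i where i: "i < n" "x i \<le> b i" by auto
        have l: "(\<Prod>i<n. indicator {b i<..} (x i)) = (0::ennreal)"
          using i by (intro prod_zero) (auto intro!: bexI[of _ i])
        have hz: "H x * indicator S x = 0"
        proof (cases "x i \<le> 0")
          case True
          then have "(\<Prod>i<n. indicator {0<..} (x i)) = (0::ennreal)"
            using i by (intro prod_zero) (auto intro!: bexI[of _ i])
          then show ?thesis unfolding H_def by simp
        next
          case False
          then have "x i \<le> a0 i" using i by (auto simp: b_def)
          then have "x i \<notin> A i" using a0[of i] i by auto
          then have "x \<notin> S" using i unfolding S by auto
          then show ?thesis by simp
        qed
        show ?thesis unfolding l hz by simp
      qed
    qed
    also have "\<dots> = emeasure (density (PM n) H) S"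
      by (rule emeasure_density[symmetric]) (use SG in auto)
    finally show "emeasure (distr M (PM n) Xv) S = emeasure (density (PM n) H) S" .
  qed
  define sumf where "sumf x = (\<Sum>i<n. x i)" for x :: "nat \<Rightarrow> real"
  have sumfm[measurable]: "sumf \<in> borel_measurable (PM n)" unfolding sumf_def by measurable
  define g where "g s = ennreal (indicator {0<..} s * (s ^ m / fact m) * Dn \<alpha> n s)" for s :: real
  have gm[measurable]: "g \<in> borel_measurable borel" unfolding g_def by measurable
  have Sm: "(\<lambda>\<omega>. \<Sum>i<n. X i \<omega>) \<in> borel_measurable M"
    by (rule borel_measurable_sum) (use assms(5) in auto)
  have distS: "distr M lborel (\<lambda>\<omega>. \<Sum>i<n. X i \<omega>) = density lborel g"
  proof -
    have "distr M lborel (\<lambda>\<omega>. \<Sum>i<n. X i \<omega>) = distr M lborel (sumf \<circ> Xv)"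
      by (rule distr_cong) (auto simp: sumf_def Xv_def)
    also have "\<dots> = distr (distr M (PM n) Xv) lborel sumf"
      by (rule distr_distr[symmetric]) (use Xvm in simp_all)
    also have "\<dots> = distr (density (PM n) H) lborel sumf" by (simp add: dist_eq)
    also have "\<dots> = density lborel g"
    proof (rule measure_eqI)
      fix B assume "B \<in> sets (distr (density (PM n) H) lborel sumf)"
      then have B[measurable]: "B \<in> sets borel" by simp
      have "emeasure (distr (density (PM n) H) lborel sumf) B = emeasure (density (PM n) H) (sumf -` B \<inter> space (PM n))"
        by (subst emeasure_distr) simp_all
      also have "\<dots> = (\<integral>\<^sup>+x. H x * indicator (sumf -` B \<inter> space (PM n)) x \<partial>PM n)"
        by (rule emeasure_density) simp_all
      also have "\<dots> = (\<integral>\<^sup>+x. (\<Prod>i<Suc m. indicator {0<..} (x i)) *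
           (\<lambda>s. ennreal (Dn \<alpha> n s) * indicator B s) (\<Sum>i<Suc m. x i) \<partial>PM (Suc m))"
        unfolding n[symmetric] by (intro nn_integral_cong) (auto simp: H_def sumf_def mult_ac split: split_indicator)
      also have "\<dots> = (\<integral>\<^sup>+s. indicator {0<..} s * ennreal (s ^ m / fact m) * (ennreal (Dn \<alpha> n s) * indicator B s) \<partial>lborel)"
        by (rule sumdist) measurable
      also have "\<dots> = (\<integral>\<^sup>+s. g s * indicator B s \<partial>lborel)"
      proof (rule nn_integral_cong)
        fix s :: real
        show "indicator {0<..} s * ennreal (s ^ m / fact m) * (ennreal (Dn \<alpha> n s) * indicator B s) = g s * indicator B s"
        proof (cases "s > 0")
          case True
          have d0: "0 \<le> Dn \<alpha> n s" using a True by (intro Dn_nonneg) auto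
          have e: "ennreal (Dn \<alpha> n s * (s ^ m / fact m)) = ennreal (Dn \<alpha> n s) * ennreal (s ^ m / fact m)"
            by (rule ennreal_mult) (use True d0 in auto)
          have gs: "g s = ennreal (Dn \<alpha> n s * (s ^ m / fact m))" using True by (simp add: g_def mult.commute)
          show ?thesis using True unfolding gs e by (simp add: mult_ac)
        qed (simp add: g_def)
      qed
      also have "\<dots> = emeasure (density lborel g) B" by (rule emeasure_density[symmetric]) simp_all
      finally show "emeasure (distr (density (PM n) H) lborel sumf) B = emeasure (density lborel g) B" .
    qed simp
    finally show ?thesis .
  qed
  have fg: "(\<lambda>x. ennreal (if x > 0 then
              x ^ (n - 1) / Gamma (real n) *
              (\<Sum>k=1..n. (-1) ^ (n + k) * exp (- (x powr \<alpha>)) *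
                 bell_partial n k (\<lambda>j. falling_fact \<alpha> j * x powr (\<alpha> - real j)))
            else 0)) = g"
  proof
    fix x :: real
    show "ennreal (if x > 0 then
              x ^ (n - 1) / Gamma (real n) *
              (\<Sum>k=1..n. (-1) ^ (n + k) * exp (- (x powr \<alpha>)) *
                 bell_partial n k (\<lambda>j. falling_fact \<alpha> j * x powr (\<alpha> - real j)))
            else 0) = g x"
    proof (cases "x > 0")
      case False then show ?thesis by (simp add: g_def)
    next
      case True
      have gam: "Gamma (real n) = fact m" unfolding n using Gamma_fact[of m] by (simp add: add.commute)
      have pw: "(x powr \<alpha>) ^ k * (1 / x) ^ n = x powr (real k * \<alpha> - real n)" for k
      proof -
        have "(x powr \<alpha>) ^ k = x powr (real k * \<alpha>)"
          using True by (simp add: powr_realpow[symmetric] powr_powr mult.commute)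
        moreover have "(1 / x) ^ n = x powr (- real n)"
          using True by (simp add: powr_minus powr_realpow power_one_over divide_inverse power_inverse)
        ultimately show ?thesis using True by (simp add: powr_add[symmetric])
      qed
      have c0: "cc \<alpha> n 0 = 0" unfolding n cc_def by simp
      have "(\<Sum>k=1..n. (-1) ^ (n + k) * exp (- (x powr \<alpha>)) *
                 bell_partial n k (\<lambda>j. falling_fact \<alpha> j * x powr (\<alpha> - real j)))
          = exp (- (x powr \<alpha>)) * (\<Sum>k=1..n. (-1) ^ (n + k) * cc \<alpha> n k * x powr (real k * \<alpha> - real n))"
        unfolding bell_falling[OF True] sum_distrib_left
      proof (intro sum.cong refl)
        fix k
        have "(-1) ^ (n + k) * exp (- (x powr \<alpha>)) * (cc \<alpha> n k * (x powr \<alpha>) ^ k * (1 / x) ^ n)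
            = exp (- (x powr \<alpha>)) * ((-1) ^ (n + k) * cc \<alpha> n k * ((x powr \<alpha>) ^ k * (1 / x) ^ n))"
          by (simp only: mult_ac)
        then show "(-1) ^ (n + k) * exp (- (x powr \<alpha>)) * (cc \<alpha> n k * (x powr \<alpha>) ^ k * (1 / x) ^ n)
            = exp (- (x powr \<alpha>)) * ((-1) ^ (n + k) * cc \<alpha> n k * x powr (real k * \<alpha> - real n))"
          unfolding pw .
      qed
      also have "(\<Sum>k=1..n. (-1) ^ (n + k) * cc \<alpha> n k * x powr (real k * \<alpha> - real n)) = Pn \<alpha> n x"
      proof -
        have "Pn \<alpha> n x = (\<Sum>k=0..n. (-1) ^ (n + k) * cc \<alpha> n k * x powr (real k * \<alpha> - real n))"
          by (simp add: Pn_def atMost_atLeast0)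
        also have "\<dots> = (\<Sum>k=1..n. (-1) ^ (n + k) * cc \<alpha> n k * x powr (real k * \<alpha> - real n))"
          by (subst sum.atLeast_Suc_atMost) (simp_all add: c0)
        finally show ?thesis by simp
      qed
      finally have "(\<Sum>k=1..n. (-1) ^ (n + k) * exp (- (x powr \<alpha>)) *
                 bell_partial n k (\<lambda>j. falling_fact \<alpha> j * x powr (\<alpha> - real j))) = Dn \<alpha> n x"
        using True by (simp add: Dn_pos)
      then show ?thesis using True unfolding g_def gam by (simp add: n)
    qed
  qed
  show ?thesis unfolding distributed_def fg using distS gm Sm by simp
qed

end
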